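(* Let $p$ be a prime and $r$ a positive integer. Then $p\in F_r$ if and only if $r<p<(p_{b(r)+1}-r)(p_{b(r)+2}-r)+r$.
   Context: $p_i$ denotes the $i$-th prime. For a positive integer $r$, $S_r$ is the multiplicative arithmetic function with $S_r(q^{\alpha})=0$ if $q\leq r$ and $S_r(q^{\alpha})=q^{\alpha-1}(q-r)$ if $q>r$, for all primes $q$ and positive integers $\alpha$. $B_r=\{n\in\mathbb{N}: S_r(n)>0\}$ (positive integers whose smallest prime factor exceeds $r$, together with $1$). $F_r$ is the set of $n\in B_r$ such that $S_r(n)<S_r(m)$ for all $m\in B_r$ with $m>n$. $b(1)=0$, and for $r\geq 2$, $b(r)$ is the largest integer with $p_{b(r)}\leq r$. *)

theory Defs
  imports "HOL-Computational_Algebra.Primes" "HOL-Library.Infinite_Set"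
begin

text \<open>The i-th prime, 1-indexed: nth_prime 1 = 2, nth_prime 2 = 3, ...\<close>
definition nth_prime :: "nat \<Rightarrow> nat" where
  "nth_prime i = enumerate {p::nat. prime p} (i - 1)"

definition S :: "nat \<Rightarrow> nat \<Rightarrow> nat" where
  "S r n = (\<Prod>q\<in>prime_factors n.
      (if q \<le> r then 0 else q ^ (multiplicity q n - 1) * (q - r)))"

definition B :: "nat \<Rightarrow> nat set" where
  "B r = {n. n > 0 \<and> S r n > 0}"

definition F :: "nat \<Rightarrow> nat set" where
  "F r = {n \<in> B r. \<forall>m \<in> B r. m > n \<longrightarrow> S r n < S r m}"

definition b :: "nat \<Rightarrow> nat" where
  "b r = (if r = 1 then 0 else (GREATEST k. k \<ge> 1 \<and> nth_prime k \<le> r))"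

end

theory Submission
  imports Defs "HOL.Binomial_Plus"
begin


fun nodiv :: "nat \<Rightarrow> nat \<Rightarrow> bool" where
  "nodiv p 0 = True"
| "nodiv p (Suc d) = (if d = 0 then True else \<not> (Suc d) dvd p \<and> nodiv p d)"

lemma nodiv_correct: "nodiv p d \<Longrightarrow> 2 \<le> e \<Longrightarrow> e \<le> d \<Longrightarrow> \<not> e dvd p"
  by (induction p d rule: nodiv.induct) (auto simp: le_Suc_eq)

lemma nodiv_step: "nodiv p n = (if n \<le> 1 then True else \<not> n dvd p \<and> nodiv p (n - 1))"
  by (cases n) auto

lemma prime_by_nodiv:
  assumes "2 \<le> p" "nodiv p s" "p < (s+1)*(s+1)"
  shows "prime (p::nat)"
proof -
  have "\<not> e dvd p" if "2 \<le> e" "e*e \<le> p" for e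
  proof -
    have "e \<le> s" proof (rule ccontr)
      assume "\<not> e \<le> s" then have "s+1 \<le> e" by simp
      then have "(s+1)*(s+1) \<le> e*e" by (intro mult_le_mono) auto
      with that assms show False by simp
    qed
    then show ?thesis using nodiv_correct[OF assms(2) that(1)] by blast
  qed
  note nd = this
  show ?thesis unfolding prime_nat_iff
  proof (intro conjI allI impI)
    show "1 < p" using assms(1) by simp
    fix m assume "m dvd p"
    then obtain k where pk: "p = m * k" by (auto elim: dvdE)
    show "m = 1 \<or> m = p"
    proof (rule ccontr)
      assume H: "\<not> (m = 1 \<or> m = p)"
      have m0: "m \<noteq> 0" using pk assms(1) by (cases "m=0") auto
      have k0: "k \<noteq> 0" using pk assms(1) by (cases "k=0") auto
      have k1: "k \<noteq> 1" using H pk by auto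
      have m2: "2 \<le> m" using H m0 by auto
      have k2: "2 \<le> k" using k0 k1 by auto
      show False
      proof (cases "m \<le> k")
        case True
        then have "m*m \<le> p" using pk by simp
        then show False using nd[OF m2] pk by simp
      next
        case False
        then have "k*k \<le> p" using pk by simp
        then show False using nd[OF k2] pk by simp
      qed
    qed
  qed
qed

fun chain :: "nat list \<Rightarrow> bool" where
  "chain (x # y # z # rest) = (x < y \<and> y < z \<and> z \<le> 2*x+1 \<and> chain (y # z # rest))"
| "chain _ = True"

lemma chain_two:
  "chain xs \<Longrightarrow> (\<forall>p\<in>set xs. prime p) \<Longrightarrow> 3 \<le> length xs \<Longrightarrow> hd xs \<le> n \<Longrightarrow> n < xs ! (length xs - 2) \<Longrightarrow>
   \<exists>p1 p2. prime p1 \<and> prime p2 \<and> n < p1 \<and> p1 < p2 \<and> p2 \<le> 2*n+1"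
proof (induction xs rule: chain.induct)
  case (1 a y c rest)
  show ?case
  proof (cases "n < y")
    case True
    then show ?thesis using 1(2,3,5) by (intro exI[of _ y] exI[of _ c]) auto
  next
    case False
    show ?thesis
    proof (cases rest)
      case Nil
      then show ?thesis using 1(6) False by simp
    next
      case (Cons d rest')
      show ?thesis
        using 1(1) 1(2) 1(3) 1(6) False Cons by (simp add: nth_Cons')
    qed
  qed
qed auto


definition plist :: "nat list" where
  "plist = [2, 3, 5, 7, 11, 13, 19, 23, 37, 47, 73, 89, 139, 179, 277, 359, 547, 719, 1093, 1439, 2179, 2879]"

lemma pr: "prime (p::nat) \<Longrightarrow> prime p" .

lemma plist_chain: "chain plist" unfolding plist_def by simp

lemma plist_primes: "\<forall>p\<in>set plist. prime p"
proof -
  have p: "prime (2::nat)" "prime (3::nat)" "prime (5::nat)" "prime (7::nat)" by simp_all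
  have q0: "prime (11::nat)"
    by (rule prime_by_nodiv[where s=3], simp, (subst nodiv_step, simp)+, simp)
  have q1: "prime (13::nat)"
    by (rule prime_by_nodiv[where s=3], simp, (subst nodiv_step, simp)+, simp)
  have q2: "prime (19::nat)"
    by (rule prime_by_nodiv[where s=4], simp, (subst nodiv_step, simp)+, simp)
  have q3: "prime (23::nat)"
    by (rule prime_by_nodiv[where s=4], simp, (subst nodiv_step, simp)+, simp)
  have q4: "prime (37::nat)"
    by (rule prime_by_nodiv[where s=6], simp, (subst nodiv_step, simp)+, simp)
  have q5: "prime (47::nat)"
    by (rule prime_by_nodiv[where s=6], simp, (subst nodiv_step, simp)+, simp)
  have q6: "prime (73::nat)"
    by (rule prime_by_nodiv[where s=8], simp, (subst nodiv_step, simp)+, simp)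
  have q7: "prime (89::nat)"
    by (rule prime_by_nodiv[where s=9], simp, (subst nodiv_step, simp)+, simp)
  have q8: "prime (139::nat)"
    by (rule prime_by_nodiv[where s=11], simp, (subst nodiv_step, simp)+, simp)
  have q9: "prime (179::nat)"
    by (rule prime_by_nodiv[where s=13], simp, (subst nodiv_step, simp)+, simp)
  have q10: "prime (277::nat)"
    by (rule prime_by_nodiv[where s=16], simp, (subst nodiv_step, simp)+, simp)
  have q11: "prime (359::nat)"
    by (rule prime_by_nodiv[where s=18], simp, (subst nodiv_step, simp)+, simp)
  have q12: "prime (547::nat)"
    by (rule prime_by_nodiv[where s=23], simp, (subst nodiv_step, simp)+, simp)
  have q13: "prime (719::nat)"
    by (rule prime_by_nodiv[where s=26], simp, (subst nodiv_step, simp)+, simp)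
  have q14: "prime (1093::nat)"
    by (rule prime_by_nodiv[where s=33], simp, (subst nodiv_step, simp)+, simp)
  have q15: "prime (1439::nat)"
    by (rule prime_by_nodiv[where s=37], simp, (subst nodiv_step, simp)+, simp)
  have q16: "prime (2179::nat)"
    by (rule prime_by_nodiv[where s=46], simp, (subst nodiv_step, simp)+, simp)
  have q17: "prime (2879::nat)"
    by (rule prime_by_nodiv[where s=53], simp, (subst nodiv_step, simp)+, simp)
  show ?thesis unfolding plist_def by (simp only: list.set ball_simps p q0 q1 q2 q3 q4 q5 q6 q7 q8 q9 q10 q11 q12 q13 q14 q15 q16 q17 simp_thms)
qed

lemma small_two_primes:
  fixes n :: nat
  assumes "1 \<le> n" "n < 2179"
  shows "\<exists>p1 p2. prime p1 \<and> prime p2 \<and> n < p1 \<and> p1 < p2 \<and> p2 \<le> 2*n+1"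
proof (cases "n = 1")
  case True
  then show ?thesis by (intro exI[of _ "2::nat"] exI[of _ "3::nat"]) simp
next
  case False
  show ?thesis
    by (rule chain_two[OF plist_chain plist_primes]) (use assms False in \<open>simp_all add: plist_def\<close>)
qed




lemma prod_subset_le_nat:
  fixes f :: "'a \<Rightarrow> nat"
  assumes "finite Y" "X \<subseteq> Y" "\<And>x. x \<in> Y - X \<Longrightarrow> 1 \<le> f x"
  shows "prod f X \<le> prod f Y"
proof -
  have "prod f Y = prod f (Y - X) * prod f X" using prod.subset_diff[OF assms(2,1)] by simp
  moreover have "1 \<le> prod f (Y - X)" using assms(3) by (intro prod_ge_1) auto
  ultimately show ?thesis by simp
qed

lemma Suc_div_dvd: "0 < (d::nat) \<Longrightarrow> Suc m div d = m div d + (if d dvd Suc m then 1 else 0)"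
  by (simp add: div_Suc dvd_eq_mod_eq_0)

lemma legendre:
  fixes p :: nat assumes p: "prime p"
  shows "m < p ^ K \<Longrightarrow> multiplicity p (fact m :: nat) = (\<Sum>i\<in>{1..K}. m div p ^ i)"
proof (induction m)
  case 0 thus ?case by simp
next
  case (Suc m)
  have IH: "multiplicity p (fact m :: nat) = (\<Sum>i\<in>{1..K}. m div p^i)" using Suc by simp
  have pos: "0 < p^i" for i using prime_gt_0_nat[OF p] by simp
  have "(\<Sum>i\<in>{1..K}. Suc m div p^i) = (\<Sum>i\<in>{1..K}. m div p^i) + (\<Sum>i\<in>{1..K}. if p^i dvd Suc m then 1 else 0)"
    by (simp add: Suc_div_dvd[OF pos] sum.distrib)
  also have "(\<Sum>i\<in>{1..K}. (if p^i dvd Suc m then 1 else 0::nat)) = card {i\<in>{1..K}. p^i dvd Suc m}"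
    using sum.inter_filter[of "{1..K}" "\<lambda>_. 1::nat" "\<lambda>i. p^i dvd Suc m"] by simp
  also have "{i\<in>{1..K}. p^i dvd Suc m} = {1..multiplicity p (Suc m)}"
  proof -
    have "p ^ multiplicity p (Suc m) dvd Suc m" by (simp add: multiplicity_dvd)
    then have "p ^ multiplicity p (Suc m) \<le> Suc m" by (rule dvd_imp_le) simp
    also have "\<dots> < p^K" using Suc.prems .
    finally have mK: "multiplicity p (Suc m) < K" using prime_gt_1_nat[OF p] by (simp add: power_strict_increasing_iff)
    have pd: "p^i dvd Suc m \<longleftrightarrow> i \<le> multiplicity p (Suc m)" for i
      by (rule power_dvd_iff_le_multiplicity) (use p in auto)
    show ?thesis by (intro set_eqI) (use mK in \<open>simp only: pd mem_Collect_eq atLeastAtMost_iff, linarith\<close>)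
  qed
  finally have eq: "(\<Sum>i\<in>{1..K}. Suc m div p^i) = multiplicity p (fact m :: nat) + multiplicity p (Suc m)"
    using IH by simp
  have "multiplicity p (fact (Suc m) :: nat) = multiplicity p (Suc m * fact m :: nat)" by simp
  also have "\<dots> = multiplicity p (Suc m) + multiplicity p (fact m :: nat)"
    by (rule prime_elem_multiplicity_mult_distrib) (use p in auto)
  finally show ?case using eq by simp
qed

lemma div2_bounds: "2 * (n div d) \<le> (2*n) div (d::nat) \<and> (2*n) div d \<le> 2 * (n div d) + 1"
proof (cases "d = 0")
  case True then show ?thesis by simp
next
  case False
  have "(n + n) div d = n div d + n div d + ((n mod d + n mod d) div d)"
    by (rule div_add1_eq)
  moreover have "(n mod d + n mod d) div d \<le> 1"
  proof -
    have "n mod d + n mod d < d * 2" using mod_less_divisor[of d n] False by linarith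
    then have "(n mod d + n mod d) div d < 2" using False by (simp add: div_less_iff_less_mult)
    then show ?thesis by simp
  qed
  ultimately show ?thesis by (simp add: mult_2)
qed

definition t :: "nat \<Rightarrow> nat \<Rightarrow> nat" where
  "t n d = (2*n) div d - 2 * (n div d)"

lemma t_le1: "t n d \<le> 1" using div2_bounds[of n d] unfolding t_def by arith

lemma t_zero: "2*n < d \<Longrightarrow> t n d = 0" by (simp add: t_def)

lemma vC:
  fixes p n :: nat assumes p: "prime p"
  shows "multiplicity p ((2*n) choose n) = (\<Sum>i\<in>{1..2*n}. t n (p^i))"
proof -
  have p2: "2 \<le> p" using prime_ge_2_nat[OF p] .
  have big: "2*n < p^(2*n)"
  proof -
    have "2*n < 2^(2*n)" by (rule less_exp)
    also have "\<dots> \<le> p^(2*n)" using p2 by (simp add: power_mono)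
    finally show ?thesis .
  qed
  have big1: "n < p^(2*n)" using big by simp
  have f: "fact n * fact n * ((2*n) choose n) = (fact (2*n) :: nat)"
    using binomial_fact_lemma[of n "2*n"] by simp
  have "multiplicity p (fact (2*n) :: nat) = multiplicity p (fact n * fact n :: nat) + multiplicity p ((2*n) choose n)"
    unfolding f[symmetric] by (rule prime_elem_multiplicity_mult_distrib) (use p in auto)
  also have "multiplicity p (fact n * fact n :: nat) = 2 * multiplicity p (fact n :: nat)"
    by (subst prime_elem_multiplicity_mult_distrib) (use p in auto)
  finally have e1: "multiplicity p (fact (2*n) :: nat) = 2 * multiplicity p (fact n :: nat) + multiplicity p ((2*n) choose n)" .
  have "(\<Sum>i\<in>{1..2*n}. (2*n) div p^i) = (\<Sum>i\<in>{1..2*n}. 2 * (n div p^i) + t n (p^i))"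
    by (intro sum.cong refl) (use div2_bounds in \<open>auto simp: t_def\<close>)
  also have "\<dots> = 2 * (\<Sum>i\<in>{1..2*n}. n div p^i) + (\<Sum>i\<in>{1..2*n}. t n (p^i))"
    by (simp add: sum.distrib sum_distrib_left)
  finally show ?thesis using e1 legendre[OF p big] legendre[OF p big1] by simp
qed

lemma v_bound:
  fixes p n j :: nat assumes p: "prime p" and j: "1 \<le> j" "2*n < p^j"
  shows "multiplicity p ((2*n) choose n) \<le> j - 1"
proof -
  have p1: "1 < p" using prime_gt_1_nat[OF p] .
  have "(\<Sum>i\<in>{1..2*n}. t n (p^i)) \<le> (\<Sum>i\<in>{1..2*n}. if i < j then 1 else 0)"
  proof (intro sum_mono)
    fix i assume "i \<in> {1..2*n}"
    show "t n (p^i) \<le> (if i < j then 1 else 0)"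
    proof (cases "i < j")
      case True then show ?thesis using t_le1 by simp
    next
      case False
      then have "p^j \<le> p^i" using p1 by (simp add: power_increasing)
      then show ?thesis using t_zero[of n "p^i"] j False by simp
    qed
  qed
  also have "\<dots> = card {i\<in>{1..2*n}. i < j}"
    using sum.inter_filter[of "{1..2*n}" "\<lambda>_. 1::nat" "\<lambda>i. i < j"] by simp
  also have "\<dots> \<le> card {1..<j}" by (intro card_mono) auto
  also have "\<dots> = j - 1" by simp
  finally show ?thesis using vC[OF p] by simp
qed

lemma pv_le:
  fixes p n :: nat assumes p: "prime p" and n: "1 \<le> n"
  shows "p ^ multiplicity p ((2*n) choose n) \<le> 2*n"
proof (rule ccontr)
  let ?v = "multiplicity p ((2*n) choose n)"
  assume "\<not> ?thesis"
  then have h: "2*n < p^?v" by simp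
  then have "?v \<noteq> 0" using n by (cases "?v = 0") auto
  then have "1 \<le> ?v" by simp
  from v_bound[OF p this h] \<open>?v \<noteq> 0\<close> show False by simp
qed

lemma v_le1:
  fixes p n :: nat assumes p: "prime p" and h: "2*n < p*p"
  shows "multiplicity p ((2*n) choose n) \<le> 1"
  using v_bound[OF p, of 2 n] h by (simp add: power2_eq_square)

lemma v_zero:
  fixes p n :: nat assumes p: "prime p" and h: "2*n < p*p" "2*n < 3*p" "p \<le> n"
  shows "multiplicity p ((2*n) choose n) = 0"
proof -
  have p1: "1 < p" using prime_gt_1_nat[OF p] .
  have "t n (p^i) = 0" if "i \<in> {1..2*n}" for i
  proof (cases "i = 1")
    case True
    have a: "n div p = 1" by (rule div_nat_eqI) (use h in auto)
    have c: "(2*n) div p = 2" by (rule div_nat_eqI) (use h in auto)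
    show ?thesis using True a c by (simp add: t_def)
  next
    case False
    then have "2 \<le> i" using that by simp
    then have "p^2 \<le> p^i" using p1 by (simp add: power_increasing)
    then show ?thesis using h by (intro t_zero) (simp add: power2_eq_square)
  qed
  then show ?thesis using vC[OF p] by simp
qed




lemma prod_primes_dvd:
  fixes x :: nat
  shows "finite A \<Longrightarrow> (\<forall>p\<in>A. prime p) \<Longrightarrow> (\<forall>p\<in>A. p dvd x) \<Longrightarrow> \<Prod>A dvd x"
proof (induction A rule: finite_induct)
  case empty then show ?case by simp
next
  case (insert a A)
  have "\<not> a dvd \<Prod>A"
  proof
    assume "a dvd \<Prod>A"
    then obtain q where "q \<in> A" "a dvd q"
      using prime_dvd_prod_iff[of A a id] insert by auto
    then have "a = q" using insert by (intro primes_dvd_imp_eq) auto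
    then show False using \<open>q \<in> A\<close> insert by simp
  qed
  then have "coprime a (\<Prod>A)" using insert by (intro prime_imp_coprime) auto
  then show ?case using insert by (simp add: divides_mult)
qed

lemma binom_odd_le: "((2*k+1) choose k) \<le> 4^k"
proof -
  have sym: "((2*k+1) choose (k+1)) = ((2*k+1) choose k)"
    using binomial_symmetric[of k "2*k+1"] by simp
  have "((2*k+1) choose k) + ((2*k+1) choose (k+1)) = (\<Sum>i\<in>{k,k+1}. (2*k+1) choose i)" by simp
  also have "\<dots> \<le> (\<Sum>i\<le>2*k+1. (2*k+1) choose i)" by (intro sum_mono2) auto
  also have "\<dots> = 2^(2*k+1)" by (rule choose_row_sum)
  finally have "2 * ((2*k+1) choose k) \<le> 2 * 4^k" using sym by (simp add: power_mult)
  then show ?thesis by simp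
qed

lemma primorial: "\<Prod>{p::nat. prime p \<and> p \<le> m} \<le> 4^m"
proof (induction m rule: less_induct)
  case (less m)
  show ?case
  proof (cases "m \<le> 2")
    case True
    have "{p::nat. prime p \<and> p \<le> m} \<subseteq> {2}"
    proof (intro subsetI)
      fix p assume "p \<in> {p::nat. prime p \<and> p \<le> m}"
      then have "prime p" "p \<le> m" by auto
      then have "2 \<le> p" by (simp add: prime_ge_2_nat)
      then show "p \<in> {2}" using True \<open>p \<le> m\<close> by simp
    qed
    then have "{p::nat. prime p \<and> p \<le> m} = {} \<or> {p::nat. prime p \<and> p \<le> m} = {2}" by blast
    then show ?thesis
    proof
      assume e0: "{p::nat. prime p \<and> p \<le> m} = {}" show ?thesis unfolding e0 by simp
    next
      assume e: "{p::nat. prime p \<and> p \<le> m} = {2}"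
      then have "2 \<le> m" by auto
      then have "(4::nat)^1 \<le> 4^m" by (intro power_increasing) auto
      then show ?thesis unfolding e by simp
    qed
  next
    case False
    show ?thesis
    proof (cases "even m")
      case True
      have "{p::nat. prime p \<and> p \<le> m} = {p::nat. prime p \<and> p \<le> m - 1}"
      proof -
        have nm: "\<not> prime m" using True False prime_odd_nat[of m] by auto
        have "prime p \<and> p \<le> m \<longleftrightarrow> prime p \<and> p \<le> m - 1" for p
        proof (cases "p = m")
          case True then show ?thesis using nm by simp
        next
          case False then show ?thesis by linarith
        qed
        then show ?thesis by simp
      qed
      moreover have "\<Prod>{p::nat. prime p \<and> p \<le> m - 1} \<le> 4^(m-1)" using less.IH[of "m-1"] False by simp
      moreover have "(4::nat)^(m-1) \<le> 4^m" by (intro power_increasing) auto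
      ultimately show ?thesis by (metis order.trans)
    next
      case odd: False
      from odd obtain k where m: "m = 2*k+1" by (rule oddE)
      have k1: "1 \<le> k" using False m by simp
      define R where "R = {p::nat. prime p \<and> k+1 < p \<and> p \<le> 2*k+1}"
      have split: "{p::nat. prime p \<and> p \<le> m} = {p::nat. prime p \<and> p \<le> k+1} \<union> R"
        unfolding R_def m by auto
      have disj: "{p::nat. prime p \<and> p \<le> k+1} \<inter> R = {}" unfolding R_def by auto
      have finR: "finite R" unfolding R_def by (rule finite_subset[of _ "{..2*k+1}"]) auto
      have fin1: "finite {p::nat. prime p \<and> p \<le> k+1}" by (rule finite_subset[of _ "{..k+1}"]) auto
      have "\<Prod>{p::nat. prime p \<and> p \<le> m} = \<Prod>{p::nat. prime p \<and> p \<le> k+1} * \<Prod>R"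
        unfolding split by (rule prod.union_disjoint[OF fin1 finR disj])
      moreover have "\<Prod>{p::nat. prime p \<and> p \<le> k+1} \<le> 4^(k+1)" by (rule less.IH) (use m k1 in simp)
      moreover have "\<Prod>R \<le> 4^k"
      proof -
        have "\<Prod>R dvd ((2*k+1) choose k)"
        proof (rule prod_primes_dvd[OF finR])
          show "\<forall>p\<in>R. prime p" unfolding R_def by auto
          show "\<forall>p\<in>R. p dvd ((2*k+1) choose k)"
          proof
            fix p assume "p \<in> R"
            then have p: "prime p" "k+1 < p" "p \<le> 2*k+1" unfolding R_def by auto
            have f0: "fact k * fact (2*k+1-k) * ((2*k+1) choose k) = (fact (2*k+1)::nat)"
              by (rule binomial_fact_lemma) simp
            have e: "2*k+1-k = k+1" by simp
            have f: "fact k * fact (k+1) * ((2*k+1) choose k) = (fact (2*k+1) :: nat)"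
              using f0 unfolding e .
            have i1: "p dvd (fact (2*k+1) :: nat) \<longleftrightarrow> p \<le> 2*k+1" by (rule prime_dvd_fact_iff[OF p(1)])
            have i2: "p dvd (fact k :: nat) \<longleftrightarrow> p \<le> k" by (rule prime_dvd_fact_iff[OF p(1)])
            have i3: "p dvd (fact (k+1) :: nat) \<longleftrightarrow> p \<le> k+1" by (rule prime_dvd_fact_iff[OF p(1)])
            have A: "p dvd (fact (2*k+1) :: nat)" using i1 p(3) by blast
            have B: "p dvd fact k * fact (k+1) * ((2*k+1) choose k)" unfolding f by (rule A)
            have C1: "\<not> p dvd (fact k :: nat)" using i2 p(2) by linarith
            have C2: "\<not> p dvd (fact (k+1) :: nat)" using i3 p(2) by linarith
            show "p dvd ((2*k+1) choose k)" using B C1 C2 prime_dvd_mult_iff[OF p(1)] by blast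
          qed
        qed
        then have "\<Prod>R \<le> ((2*k+1) choose k)" by (rule dvd_imp_le) simp
        then show ?thesis using binom_odd_le[of k] by simp
      qed
      ultimately have "\<Prod>{p::nat. prime p \<and> p \<le> m} \<le> 4^(k+1) * 4^k"
        using mult_le_mono by presburger
      also have "\<dots> = 4^m" unfolding m by (simp add: power_add[symmetric])
      finally show ?thesis .
    qed
  qed
qed

lemma central_lower: "4^n \<le> (2*n+1) * ((2*n) choose n)"
proof -
  have "(4::nat)^n = (\<Sum>i\<le>2*n. (2*n) choose i)" by (simp add: choose_row_sum power_mult)
  also have "\<dots> \<le> (\<Sum>i\<le>2*n. (2*n) choose n)" by (intro sum_mono binomial_maximum')
  also have "\<dots> = (2*n+1) * ((2*n) choose n)" by simp
  finally show ?thesis .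
qed

lemma eight_le: "6 \<le> j \<Longrightarrow> 8 * (j+1) \<le> (2::nat)^j"
proof (induction j rule: dec_induct)
  case base then show ?case by simp
next
  case (step j) then show ?case by simp
qed

lemma big_ineq:
  fixes k :: nat assumes k: "64 \<le> k"
  shows "(k+1)^(6*k+12) < 2^(k*k)"
proof -
  obtain j where j: "2^j \<le> k+1" "k+1 < 2^(j+1)" using ex_power_ivl1[of 2 "k+1"] by auto
  have "6 \<le> j"
  proof (rule ccontr)
    assume "\<not> 6 \<le> j" then have "j+1 \<le> 6" by simp
    then have "(2::nat)^(j+1) \<le> 2^6" by (intro power_increasing) auto
    then show False using j k by simp
  qed
  then have j8: "8*(j+1) \<le> k+1" using eight_le[of j] j by simp
  have "(k+1)^(6*k+12) < (2^(j+1))^(6*k+12)" using j by (intro power_strict_mono) auto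
  also have "\<dots> = 2^((j+1)*(6*k+12))" by (simp only: power_mult)
  also have "\<dots> \<le> 2^(k*k)"
  proof (intro power_increasing)
    have "8*((j+1)*(6*k+12)) = (8*(j+1))*(6*k+12)" by (simp only: mult.assoc)
    also have "\<dots> \<le> (k+1)*(6*k+12)" using j8 by (intro mult_right_mono) auto
    also have "\<dots> \<le> 8*(k*k)"
    proof -
      have h: "64*k \<le> k*k" using k by (intro mult_right_mono) auto
      have "(k+1)*(6*k+12) = 6*(k*k) + 18*k + 12" by (simp add: algebra_simps)
      then show ?thesis using h k by linarith
    qed
    finally show "(j+1)*(6*k+12) \<le> k*k" by simp
  qed auto
  finally show ?thesis .
qed

lemma sqrt_ex: "\<exists>k::nat. k*k \<le> m \<and> m < (k+1)*(k+1)"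
proof (induction m)
  case 0 then show ?case by (intro exI[of _ 0]) simp
next
  case (Suc m)
  then obtain k where k: "k*k \<le> m" "m < (k+1)*(k+1)" by blast
  show ?case
  proof (cases "Suc m < (k+1)*(k+1)")
    case True then show ?thesis using k by (intro exI[of _ k]) simp
  next
    case False
    then have e: "Suc m = (k+1)*(k+1)" using k(2) by linarith
    have "(k+1+1)*(k+1+1) = (k+1)*(k+1) + (2*k+3)" by (simp add: algebra_simps)
    then have "Suc m < (k+1+1)*(k+1+1)" using e by linarith
    then show ?thesis using e by (intro exI[of _ "k+1"]) simp
  qed
qed




lemma C_prod_bound:
  fixes n :: nat assumes n: "1 \<le> n"
  shows "((2*n) choose n) \<le> (\<Prod>p\<in>{p::nat. prime p \<and> p \<le> 2*n}.
     (if p*p \<le> 2*n then 2*n else 1) * (if 3*p \<le> 2*n then p else 1) * (if n < p then p else 1))"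
proof -
  let ?C = "(2*n) choose n"
  let ?P = "{p::nat. prime p \<and> p \<le> 2*n}"
  let ?h = "\<lambda>p. (if p*p \<le> 2*n then 2*n else 1) * (if 3*p \<le> 2*n then p else 1) * (if n < p then p else (1::nat))"
  have C0: "?C > 0" by (simp add: zero_less_binomial)
  have hge: "1 \<le> ?h p" if "1 \<le> p" for p using n that by simp
  have "?C = (\<Prod>p\<in>prime_factors ?C. p ^ multiplicity p ?C)" by (rule prime_factorization_nat) (use C0 in simp)
  also have "\<dots> \<le> (\<Prod>p\<in>prime_factors ?C. ?h p)"
  proof (rule prod_mono)
    fix p assume pf: "p \<in> prime_factors ?C"
    then have p: "prime p" by (simp add: prime_factors_multiplicity)
    have p1: "1 \<le> p" using prime_ge_1_nat[OF p] .
    let ?v = "multiplicity p ?C"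
    have "p ^ ?v \<le> ?h p"
    proof (cases "p*p \<le> 2*n")
      case True
      have "p ^ ?v \<le> 2*n" by (rule pv_le[OF p n])
      also have "\<dots> \<le> 2*n * ((if 3*p \<le> 2*n then p else 1) * (if n < p then p else 1))"
        using p1 by simp
      finally show ?thesis using True by (simp add: mult.assoc)
    next
      case False
      then have lt: "2*n < p*p" by simp
      have v1: "?v \<le> 1" by (rule v_le1[OF p lt])
      then have "?v = 0 \<or> ?v = 1" by linarith
      then have pv: "p ^ ?v \<le> p" using p1 by (elim disjE) simp_all
      show ?thesis
      proof (cases "3*p \<le> 2*n")
        case True then show ?thesis using False pv p1 by simp
      next
        case F3: False
        show ?thesis
        proof (cases "p \<le> n")
          case True
          have "?v = 0" by (rule v_zero[OF p lt]) (use F3 True in auto)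
          then show ?thesis using hge[OF p1] by simp
        next
          case False then show ?thesis using F3 \<open>\<not> p*p \<le> 2*n\<close> pv by simp
        qed
      qed
    qed
    then show "0 \<le> p ^ ?v \<and> p ^ ?v \<le> ?h p" by simp
  qed
  also have "\<dots> \<le> (\<Prod>p\<in>?P. ?h p)"
  proof (rule prod_subset_le_nat)
    show "finite ?P" by (rule finite_subset[of _ "{..2*n}"]) auto
    show "prime_factors ?C \<subseteq> ?P"
    proof
      fix p assume pf: "p \<in> prime_factors ?C"
      then have p: "prime p" and v: "0 < multiplicity p ?C" by (simp_all add: prime_factors_multiplicity)
      have "p ^ 1 \<le> p ^ multiplicity p ?C" using v prime_ge_1_nat[OF p] by (intro power_increasing) auto
      also have "\<dots> \<le> 2*n" by (rule pv_le[OF p n])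
      finally show "p \<in> ?P" using p by simp
    qed
    show "\<And>x. x \<in> ?P - prime_factors ?C \<Longrightarrow> 1 \<le> ?h x" using hge prime_ge_1_nat by auto
  qed
  finally show ?thesis .
qed

lemma prod_split3:
  fixes n :: nat
  shows "(\<Prod>p\<in>{p::nat. prime p \<and> p \<le> 2*n}.
     (if p*p \<le> 2*n then 2*n else 1) * (if 3*p \<le> 2*n then p else 1) * (if n < p then p else 1))
   = (2*n)^(card {p. prime p \<and> p \<le> 2*n \<and> p*p \<le> 2*n}) * \<Prod>{p::nat. prime p \<and> p \<le> 2*n div 3}
     * \<Prod>{p::nat. prime p \<and> n < p \<and> p \<le> 2*n}"
proof -
  let ?P = "{p::nat. prime p \<and> p \<le> 2*n}"
  have fin: "finite ?P" by (rule finite_subset[of _ "{..2*n}"]) auto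
  have a: "(\<Prod>p\<in>?P. (if p*p \<le> 2*n then 2*n else 1)) = (\<Prod>p\<in>{p\<in>?P. p*p \<le> 2*n}. 2*n)"
    by (rule prod.inter_filter[OF fin, symmetric])
  have a2: "{p\<in>?P. p*p \<le> 2*n} = {p. prime p \<and> p \<le> 2*n \<and> p*p \<le> 2*n}" by auto
  have b: "(\<Prod>p\<in>?P. (if 3*p \<le> 2*n then p else 1)) = (\<Prod>p\<in>{p\<in>?P. 3*p \<le> 2*n}. p)"
    by (rule prod.inter_filter[OF fin, symmetric])
  have b2: "{p\<in>?P. 3*p \<le> 2*n} = {p::nat. prime p \<and> p \<le> 2*n div 3}"
  proof -
    have "(3*p \<le> 2*n) = (p \<le> 2*n div 3)" for p :: nat by presburger
    then show ?thesis by auto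
  qed
  have c: "(\<Prod>p\<in>?P. (if n < p then p else 1)) = (\<Prod>p\<in>{p\<in>?P. n < p}. p)"
    by (rule prod.inter_filter[OF fin, symmetric])
  have c2: "{p\<in>?P. n < p} = {p::nat. prime p \<and> n < p \<and> p \<le> 2*n}" by auto
  show ?thesis
    unfolding prod.distrib a a2 b b2 c c2 by simp
qed

lemma card_small_primes:
  fixes n k :: nat assumes "2*n < (k+1)*(k+1)"
  shows "card {p. prime p \<and> p \<le> 2*n \<and> p*p \<le> 2*n} \<le> k"
proof -
  have "{p. prime p \<and> p \<le> 2*n \<and> p*p \<le> 2*n} \<subseteq> {1..k}"
  proof
    fix p assume "p \<in> {p. prime p \<and> p \<le> 2*n \<and> p*p \<le> 2*n}"
    then have p: "prime p" "p*p \<le> 2*n" by auto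
    have "p \<le> k"
    proof (rule ccontr)
      assume "\<not> p \<le> k" then have "k+1 \<le> p" by simp
      then have "(k+1)*(k+1) \<le> p*p" by (intro mult_le_mono) auto
      then show False using p assms by simp
    qed
    then show "p \<in> {1..k}" using prime_ge_1_nat[OF p(1)] by simp
  qed
  then have "card {p. prime p \<and> p \<le> 2*n \<and> p*p \<le> 2*n} \<le> card {1..k}" by (intro card_mono) auto
  then show ?thesis by simp
qed

lemma erdos:
  fixes n :: nat assumes n: "2048 \<le> n"
  shows "\<exists>p1 p2. prime p1 \<and> prime p2 \<and> n < p1 \<and> p1 < p2 \<and> p2 \<le> 2*n"
proof (rule ccontr)
  assume H: "\<not> ?thesis"
  define R where "R = {p::nat. prime p \<and> n < p \<and> p \<le> 2*n}"
  have Rle: "\<Prod>R \<le> 2*n"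
  proof (cases "R = {}")
    case True then show ?thesis using n by simp
  next
    case False
    then obtain q where q: "q \<in> R" by blast
    have "R = {q}"
    proof (intro equalityI subsetI)
      fix x assume x: "x \<in> R"
      show "x \<in> {q}"
      proof (rule ccontr)
        assume "x \<notin> {q}"
        then have "x < q \<or> q < x" by auto
        then show False using H x q unfolding R_def by auto
      qed
    qed (use q in auto)
    moreover have "q \<le> 2*n" using q unfolding R_def by simp
    ultimately show ?thesis by simp
  qed
  obtain k where k: "k*k \<le> 2*n" "2*n < (k+1)*(k+1)" using sqrt_ex by blast
  have k64: "64 \<le> k"
  proof (rule ccontr)
    assume "\<not> 64 \<le> k" then have "k+1 \<le> 64" by simp
    then have "(k+1)*(k+1) \<le> 64*64" by (intro mult_le_mono) auto
    then show False using k n by simp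
  qed
  define t where "t = 2*n div 3"
  have t3: "3*t \<le> 2*n" unfolding t_def by simp
  have n1: "1 \<le> n" using n by simp
  have A1: "(2*n)^(card {p. prime p \<and> p \<le> 2*n \<and> p*p \<le> 2*n}) \<le> (2*n)^k"
    using card_small_primes[OF k(2)] n by (intro power_increasing) auto
  have A2: "\<Prod>{p::nat. prime p \<and> p \<le> 2*n div 3} \<le> 4^t" unfolding t_def by (rule primorial)
  have "4^n \<le> (2*n+1) * ((2*n) choose n)" by (rule central_lower)
  also have "\<dots> \<le> (2*n+1) * ((2*n)^k * 4^t * (2*n))"
  proof (intro mult_le_mono order.refl)
    have "((2*n) choose n) \<le> (2*n)^(card {p. prime p \<and> p \<le> 2*n \<and> p*p \<le> 2*n}) * \<Prod>{p::nat. prime p \<and> p \<le> 2*n div 3}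
     * \<Prod>R"
      using C_prod_bound[OF n1] unfolding prod_split3 R_def .
    also have "\<dots> \<le> (2*n)^k * 4^t * (2*n)"
      using A1 A2 Rle by (intro mult_le_mono) auto
    finally show "((2*n) choose n) \<le> (2*n)^k * 4^t * (2*n)" .
  qed
  also have "\<dots> = ((2*n+1) * (2*n)^(k+1)) * 4^t" by (simp add: algebra_simps)
  finally have E: "4^n \<le> ((2*n+1) * (2*n)^(k+1)) * 4^t" .
  define X where "X = (2*n+1) * (2*n)^(k+1)"
  have tn: "t \<le> n" using t3 by simp
  have "(4::nat)^n = 4^(n-t) * 4^t" using tn by (simp add: power_add[symmetric])
  then have "4^(n-t) * 4^t \<le> X * 4^t" using E unfolding X_def by simp
  then have E2: "4^(n-t) \<le> X" by simp
  have "(4::nat)^n \<le> 4^(3*(n-t))" using t3 by (intro power_increasing) auto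
  also have "\<dots> = (4^(n-t))^3" by (simp add: power_mult mult.commute)
  also have "\<dots> \<le> X^3" using E2 by (intro power_mono) auto
  finally have E3: "4^n \<le> X^3" .
  have "X \<le> (k+1)^2 * ((k+1)^2)^(k+1)"
  proof -
    have a: "2*n+1 \<le> (k+1)^2" using k(2) by (simp add: power2_eq_square)
    have bb: "2*n \<le> (k+1)^2" using k(2) by (simp add: power2_eq_square)
    have "(2*n)^(k+1) \<le> ((k+1)^2)^(k+1)" using bb by (intro power_mono) auto
    then show ?thesis unfolding X_def using a by (intro mult_le_mono) auto
  qed
  also have "\<dots> = (k+1)^(2 + 2*(k+1))" by (simp only: power_mult[symmetric] power_add[symmetric])
  also have "\<dots> = (k+1)^(2*k+4)" by (rule arg_cong[where f="\<lambda>e. (k+1)^e"]) simp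
  finally have X1: "X \<le> (k+1)^(2*k+4)" .
  have "X^3 \<le> ((k+1)^(2*k+4))^3" using X1 by (intro power_mono) auto
  also have "\<dots> = (k+1)^((2*k+4)*3)" by (simp only: power_mult[symmetric])
  also have "\<dots> = (k+1)^(6*k+12)" by (rule arg_cong[where f="\<lambda>e. (k+1)^e"]) simp
  finally have X3: "X^3 \<le> (k+1)^(6*k+12)" .
  have "(2::nat)^(k*k) \<le> 2^(2*n)" using k(1) by (intro power_increasing) auto
  also have "\<dots> = 4^n" by (simp add: power_mult)
  finally have "2^(k*k) \<le> (k+1)^(6*k+12)" using E3 X3 by linarith
  then show False using big_ineq[OF k64] by simp
qed




lemma two_primes:
  fixes n :: nat assumes "1 \<le> n"
  shows "\<exists>p1 p2. prime p1 \<and> prime p2 \<and> n < p1 \<and> p1 < p2 \<and> p2 \<le> 2*n+1"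
proof (cases "n < 2179")
  case True then show ?thesis using small_two_primes assms by blast
next
  case False
  then obtain p1 p2 where "prime p1 \<and> prime p2 \<and> n < p1 \<and> p1 < p2 \<and> p2 \<le> 2*n"
    using erdos[of n] by auto
  then show ?thesis by (intro exI[of _ p1] exI[of _ p2]) auto
qed

lemma bertrand:
  fixes n :: nat assumes "1 \<le> n"
  shows "\<exists>p. prime p \<and> n < p \<and> p \<le> 2*n"
proof -
  obtain p1 p2 where "prime p1" "prime p2" "n < p1" "p1 < p2" "p2 \<le> 2*n+1"
    using two_primes[OF assms] by blast
  then show ?thesis by (intro exI[of _ p1]) auto
qed

abbreviation "ep \<equiv> enumerate {p::nat. prime p}"

lemma ep_prime: "prime (ep i)"
  using enumerate_in_set[OF primes_infinite] by simp

lemma ep_smono: "strict_mono ep"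
  by (rule strict_mono_enumerate[OF primes_infinite])

lemma ep_ex: "prime p \<Longrightarrow> \<exists>j. ep j = p"
  using enumerate_Ex[OF primes_infinite] by simp

lemma ep_0: "ep 0 = 2"
proof -
  have "ep 0 = (LEAST n::nat. n \<in> {p. prime p})" by (simp add: enumerate_0)
  also have "\<dots> = 2"
    by (rule Least_equality) (auto simp: prime_ge_2_nat)
  finally show ?thesis .
qed

lemma ep_ge: "i + 2 \<le> ep i"
proof (induction i)
  case 0 then show ?case by (simp add: ep_0)
next
  case (Suc i)
  have "ep i < ep (Suc i)" using ep_smono by (simp add: strict_mono_def)
  then show ?case using Suc by simp
qed

lemma ep_less_iff: "ep i < ep j \<longleftrightarrow> i < j"
  using ep_smono by (simp add: strict_mono_less)

lemma ep_le_iff: "ep i \<le> ep j \<longleftrightarrow> i \<le> j"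
  using ep_smono by (simp add: strict_mono_less_eq)

lemma nth_prime_ep: "nth_prime (Suc i) = ep i"
  by (simp add: nth_prime_def)

lemma q1_props:
  fixes r :: nat assumes r: "r > 0"
  shows "r < ep (b r)" "\<And>p. prime p \<Longrightarrow> r < p \<Longrightarrow> ep (b r) \<le> p"
proof -
  have "r < ep (b r) \<and> (\<forall>p. prime p \<and> r < p \<longrightarrow> ep (b r) \<le> p)"
  proof (cases "r = 1")
    case True
    then have "b r = 0" by (simp add: b_def)
    then show ?thesis using True prime_ge_2_nat by (auto simp: ep_0)
  next
    case False
    then have r2: "2 \<le> r" using r by simp
    let ?G = "\<lambda>k. k \<ge> 1 \<and> nth_prime k \<le> r"
    have G1: "?G 1" using r2 by (simp add: nth_prime_def ep_0)
    have Gb: "y \<le> r" if "?G y" for y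
    proof -
      have "y \<noteq> 0" using that by simp
      then obtain i where i: "y = Suc i" using not0_implies_Suc by blast
      have "i + 2 \<le> ep i" by (rule ep_ge)
      then show ?thesis using that i by (simp add: nth_prime_ep)
    qed
    have bdef: "b r = (GREATEST k. ?G k)" using False by (simp add: b_def)
    have Gbr: "?G (b r)" unfolding bdef by (rule GreatestI_nat[where P="?G", OF G1 Gb])
    have notG: "\<not> ?G (Suc (b r))"
    proof
      assume "?G (Suc (b r))"
      then have "Suc (b r) \<le> b r" unfolding bdef by (rule Greatest_le_nat[where P="?G", OF _ Gb])
      then show False by simp
    qed
    have gt: "r < ep (b r)" using notG by (simp add: nth_prime_ep)
    obtain g where g: "b r = Suc g" using Gbr by (cases "b r") auto
    have le: "ep g \<le> r" using Gbr g by (simp add: nth_prime_ep)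
    have "ep (b r) \<le> p" if pp: "prime p" "r < p" for p
    proof -
      obtain j where j: "ep j = p" using ep_ex[OF pp(1)] by blast
      have "\<not> j \<le> g"
      proof
        assume "j \<le> g" then have "ep j \<le> ep g" by (simp add: ep_le_iff)
        then show False using le j pp by simp
      qed
      then have "b r \<le> j" using g by simp
      then show ?thesis using j ep_le_iff[of "b r" j] by simp
    qed
    then show ?thesis using gt by blast
  qed
  then show "r < ep (b r)" "\<And>p. prime p \<Longrightarrow> r < p \<Longrightarrow> ep (b r) \<le> p" by auto
qed

lemma next_prime_props:
  "ep g < ep (Suc g)" "\<And>p. prime p \<Longrightarrow> ep g < p \<Longrightarrow> ep (Suc g) \<le> p"
proof -
  show "ep g < ep (Suc g)" by (simp add: ep_less_iff)
  fix p assume p: "prime p" "ep g < p"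
  obtain j where j: "ep j = p" using ep_ex[OF p(1)] by blast
  then have "g < j" using p ep_less_iff by metis
  then show "ep (Suc g) \<le> p" using j ep_le_iff[of "Suc g" j] by simp
qed

lemma S_prime:
  fixes q r :: nat assumes q: "prime q"
  shows "S r q = (if q \<le> r then 0 else q - r)"
  using q by (simp add: S_def prime_prime_factors)

lemma S_two:
  fixes a c r :: nat assumes a: "prime a" and c: "prime c" and ac: "a \<noteq> c"
  shows "S r (a*c) = (if a \<le> r then 0 else a - r) * (if c \<le> r then 0 else c - r)"
proof -
  have pf: "prime_factors (a*c) = {a, c}"
    using a c by (simp add: prime_factors_product prime_prime_factors prime_gt_0_nat insert_commute)
  have ma: "multiplicity a (a*c) = 1"
    using a c ac by (simp add: prime_elem_multiplicity_mult_distrib prime_multiplicity_other prime_gt_0_nat)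
  have mc: "multiplicity c (a*c) = 1"
    using a c ac by (simp add: prime_elem_multiplicity_mult_distrib prime_multiplicity_other prime_gt_0_nat)
  show ?thesis unfolding S_def pf using ac ma mc by simp
qed

lemma S_ge_sub:
  fixes m r :: nat
  assumes "T \<subseteq> prime_factors m" and "\<forall>q\<in>prime_factors m. r < q"
  shows "(\<Prod>q\<in>T. q ^ (multiplicity q m - 1) * (q - r)) \<le> S r m"
proof -
  have "(\<Prod>q\<in>T. q ^ (multiplicity q m - 1) * (q - r)) =
        (\<Prod>q\<in>T. (if q \<le> r then 0 else q ^ (multiplicity q m - 1) * (q - r)))"
    using assms by (intro prod.cong) auto
  also have "\<dots> \<le> S r m" unfolding S_def
  proof (rule prod_subset_le_nat[OF _ assms(1)])
    show "finite (prime_factors m)" by simp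
    fix x assume "x \<in> prime_factors m - T"
    then have "r < x" "0 < x" using assms(2) by (auto simp: prime_factors_multiplicity prime_gt_0_nat)
    then show "1 \<le> (if x \<le> r then 0 else x ^ (multiplicity x m - 1) * (x - r))" by simp
  qed
  finally show ?thesis .
qed

lemma B_factors:
  fixes m r :: nat
  assumes "m \<in> B r" "q \<in> prime_factors m"
  shows "r < q"
proof (rule ccontr)
  assume "\<not> r < q"
  have fin: "finite (prime_factors m)" by simp
  have "\<exists>a\<in>prime_factors m. (if a \<le> r then 0 else a ^ (multiplicity a m - 1) * (a - r)) = 0"
    using assms(2) \<open>\<not> r < q\<close> by (intro bexI[of _ q]) auto
  then have "S r m = 0" unfolding S_def using prod_zero_iff[OF fin] by blast
  then show False using assms(1) by (simp add: B_def)
qed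




theorem theorem3p1:
  fixes p r :: nat
  assumes "prime p" and "r > 0"
  shows "p \<in> F r \<longleftrightarrow>
    r < p \<and> p < (nth_prime (b r + 1) - r) * (nth_prime (b r + 2) - r) + r"
proof -
  note pp = assms(1) and r0 = assms(2)
  define q1 where "q1 = ep (b r)"
  define q2 where "q2 = ep (Suc (b r))"
  have nq: "nth_prime (b r + 1) = q1" "nth_prime (b r + 2) = q2"
    unfolding q1_def q2_def by (simp_all add: nth_prime_def)
  have q1p: "prime q1" "prime q2" unfolding q1_def q2_def by (rule ep_prime)+
  have rq1: "r < q1" and q1min: "\<And>x. prime x \<Longrightarrow> r < x \<Longrightarrow> q1 \<le> x"
    using q1_props[OF r0] unfolding q1_def by auto
  have q12: "q1 < q2" and q2min: "\<And>x. prime x \<Longrightarrow> q1 < x \<Longrightarrow> q2 \<le> x"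
    using next_prime_props(1)[where g="b r"] next_prime_props(2)[where g="b r"] unfolding q1_def q2_def by auto
  have q1_2r: "q1 \<le> 2*r"
  proof -
    obtain x where x: "prime x" "r < x" "x \<le> 2*r" using bertrand[of r] r0 by auto
    then show ?thesis using q1min[OF x(1,2)] by simp
  qed
  have q2_le: "q2 \<le> q1 + r"
  proof -
    obtain x y where xy: "prime x" "prime y" "r < x" "x < y" "y \<le> 2*r+1" using two_primes[of r] r0 by auto
    have "q1 \<le> x" using q1min[OF xy(1,3)] .
    then have "q2 \<le> y" using q2min[OF xy(2)] xy(4) by simp
    then show ?thesis using xy(5) rq1 by simp
  qed
  define A where "A = q1 - r"
  define Bq where "Bq = q2 - r"
  have A1: "1 \<le> A" unfolding A_def using rq1 by simp
  have B1: "1 \<le> Bq" unfolding Bq_def using rq1 q12 by simp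
  have Sp: "S r p = (if p \<le> r then 0 else p - r)" by (rule S_prime[OF pp])
  have p2: "2 \<le> p" using prime_ge_2_nat[OF pp] .
  show ?thesis unfolding nq A_def[symmetric] Bq_def[symmetric]
  proof
    assume pF: "p \<in> F r"
    then have pB: "p \<in> B r" and pmin: "\<And>m. m \<in> B r \<Longrightarrow> p < m \<Longrightarrow> S r p < S r m"
      by (auto simp: F_def)
    have rp: "r < p" using pB Sp by (auto simp: B_def split: if_splits)
    have Spv: "S r p = p - r" using rp Sp by simp
    show "r < p \<and> p < A * Bq + r"
    proof (rule conjI[OF rp], rule ccontr)
      assume "\<not> p < A*Bq + r" then have big: "A*Bq + r \<le> p" by simp
      show False
      proof (cases "p < q1*q2")
        case True
        have Sm: "S r (q1*q2) = A*Bq"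
          using S_two[OF q1p(1) q1p(2)] q12 rq1 unfolding A_def Bq_def by simp
        have "0 < A*Bq" using A1 B1 by simp
        moreover have "0 < q1*q2" using q1p by (simp add: prime_gt_0_nat)
        ultimately have "q1*q2 \<in> B r" using Sm by (simp add: B_def)
        then have "S r p < S r (q1*q2)" using pmin True by blast
        then show False using Sm Spv big by simp
      next
        case False
        define nn where "nn = p div q1"
        have q10: "0 < q1" using rq1 by simp
        have "q2 \<le> nn"
        proof -
          have "(q2*q1) div q1 \<le> p div q1" using False by (intro div_le_mono) (simp add: mult.commute)
          then show ?thesis using q10 unfolding nn_def by simp
        qed
        then have nn1: "1 \<le> nn" using q12 by simp
        obtain x where x: "prime x" "nn < x" "x \<le> 2*nn" using bertrand[OF nn1] by auto
        have xq1: "q1 < x" using \<open>q2 \<le> nn\<close> q12 x(2) by simp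
        have rx: "r < x" using xq1 rq1 by simp
        have Sm: "S r (q1*x) = A*(x - r)"
          using S_two[OF q1p(1) x(1)] xq1 rq1 rx unfolding A_def by simp
        have "0 < A*(x-r)" using A1 rx by simp
        moreover have "0 < q1*x" using q10 rx by simp
        ultimately have mB: "q1*x \<in> B r" using Sm by (simp add: B_def)
        have "p < q1 * Suc nn"
        proof -
          have "p = q1 * nn + p mod q1" unfolding nn_def by simp
          moreover have "p mod q1 < q1" using q10 by simp
          ultimately show ?thesis by simp
        qed
        also have "\<dots> \<le> q1 * x" using x(2) by (intro mult_le_mono2) simp
        finally have "p < q1*x" .
        then have lt: "p - r < A*(x - r)" using pmin[OF mB] Sm Spv by simp
        have twoA: "2*A \<le> q1" unfolding A_def using q1_2r rq1 by simp
        have "A*x \<le> A*(2*nn)" using x(3) by (intro mult_le_mono2)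
        also have "\<dots> = (2*A)*nn" by simp
        also have "\<dots> \<le> q1*nn" using twoA by (intro mult_le_mono1)
        also have "\<dots> \<le> p" unfolding nn_def by (rule times_div_less_eq_dividend)
        finally have Ax: "A*x \<le> p" .
        have "A*(x-r) + A*r = A*x" using rx by (simp add: diff_mult_distrib2)
        moreover have "r \<le> A*r" using A1 by simp
        ultimately have "A*(x-r) + r \<le> p" using Ax by linarith
        then show False using lt by linarith
      qed
    qed
  next
    assume H: "r < p \<and> p < A*Bq + r"
    have Spv: "S r p = p - r" using H Sp by simp
    have pB: "p \<in> B r" using Spv H by (simp add: B_def)
    have "S r p < S r m" if mB: "m \<in> B r" and pm: "p < m" for m
    proof -
      have m0: "0 < m" using pm by simp
      have fac: "\<And>q. q \<in> prime_factors m \<Longrightarrow> r < q" using B_factors[OF mB] by blast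
      have facq1: "\<And>q. q \<in> prime_factors m \<Longrightarrow> q1 \<le> q"
        using fac q1min by (auto simp: prime_factors_multiplicity)
      have "m \<noteq> 1" using pm p2 by simp
      then obtain q where q: "prime q" "q dvd m" using prime_factor_nat by blast
      then have qpf: "q \<in> prime_factors m" using m0 by (simp add: in_prime_factors_iff)
      let ?f = "\<lambda>z. z ^ (multiplicity z m - 1) * (z - r)"
      have fge: "z - r \<le> ?f z" if "z \<in> prime_factors m" for z
      proof -
        have "0 < z" using that by (auto simp: prime_factors_multiplicity prime_gt_0_nat)
        then have "1 \<le> z ^ (multiplicity z m - 1)" by simp
        then show ?thesis by simp
      qed
      show ?thesis
      proof (cases "\<exists>q'\<in>prime_factors m. q' \<noteq> q")
        case True
        then obtain q' where q': "q' \<in> prime_factors m" "q' \<noteq> q" by blast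
        define lo where "lo = min q q'"
        define hi where "hi = max q q'"
        have lohi: "lo \<in> prime_factors m" "hi \<in> prime_factors m" "lo < hi"
          unfolding lo_def hi_def using q' qpf by (auto simp: min_def max_def)
        have "q1 \<le> lo" using facq1[OF lohi(1)] .
        then have hiq2: "q2 \<le> hi" using q2min lohi by (auto simp: prime_factors_multiplicity)
        have "A*Bq \<le> (lo - r) * (hi - r)"
          unfolding A_def Bq_def using \<open>q1 \<le> lo\<close> hiq2 by (intro mult_le_mono) auto
        also have "\<dots> \<le> ?f lo * ?f hi" using fge lohi by (intro mult_le_mono) auto
        also have "\<dots> = (\<Prod>z\<in>{lo,hi}. ?f z)" using lohi by simp
        also have "\<dots> \<le> S r m" by (rule S_ge_sub) (use lohi fac in auto)
        finally show ?thesis using Spv H by linarith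
      next
        case False
        then have pf: "prime_factors m = {q}" using qpf by blast
        define v where "v = multiplicity q m"
        have e: "(\<Prod>z\<in>prime_factors m. z ^ multiplicity z m) = m"
          by (rule prime_factorization_nat[OF m0, symmetric])
        have mq: "m = q ^ v" using e unfolding pf v_def by simp
        have Sm: "S r m = q^(v-1) * (q - r)"
          unfolding S_def pf v_def using fac[OF qpf] by simp
        have "v \<noteq> 0" using mq pm p2 by (cases "v = 0") auto
        show ?thesis
        proof (cases "v = 1")
          case True
          then have "S r m = q - r" "m = q" using Sm mq by simp_all
          then show ?thesis using pm Spv H by (simp; linarith)
        next
          case False
          then have v2: "1 \<le> v - 1" using \<open>v \<noteq> 0\<close> by simp
          have q0: "0 < q" using q(1) by (simp add: prime_gt_0_nat)
          have "q ^ 1 \<le> q^(v-1)" using v2 q0 by (intro power_increasing) auto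
          then have qq: "q \<le> q^(v-1)" by simp
          have "A*Bq \<le> (q - r) * q"
          proof (intro mult_le_mono)
            show "A \<le> q - r" unfolding A_def using facq1[OF qpf] by simp
            show "Bq \<le> q" unfolding Bq_def using facq1[OF qpf] q2_le by simp
          qed
          also have "\<dots> \<le> (q - r) * q^(v-1)" using qq by (intro mult_le_mono2)
          also have "\<dots> = S r m" using Sm by simp
          finally show ?thesis using Spv H by linarith
        qed
      qed
    qed
    then show "p \<in> F r" using pB by (simp add: F_def)
  qed
qed


end
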